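(* Let $G$ be a locally compact group and $K$ a compact subgroup with normalized Haar measure $dk$ such that $(G,K)$ is a central pair. Let $\omega, f\in\mathcal{C}(G)$ with $\omega$ $K$-central. Then the pair $(\omega,f)$ satisfies $$\int_K\omega(xkyk^{-1})\,dk+\int_K\omega(ykxk^{-1})\,dk=2\omega(x)f(y)+2\omega(y)f(x)\quad\text{for all }x,y\in G$$ if and only if it satisfies $$\int_K\omega(xkyk^{-1})\,dk=\omega(x)f(y)+\omega(y)f(x)\quad\text{for all }x,y\in G.$$
   Context: A function $f$ on $G$ is $K$-central if $f(kx)=f(xk)$ for all $k\in K,x\in G$. Let $\mathcal{K}_K(G)$ be the space of continuous compactly supported $K$-central functions on $G$; it is an algebra under convolution. $(G,K)$ is a central pair if $(\mathcal{K}_K(G),\star)$ is commutative. $\mathcal{C}(G)$ is the space of complex continuous functions on $G$. *)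

theory Defs
  imports "HOL-Analysis.Analysis"
begin

definition locally_compact_group ::
  "('g::t2_space \<Rightarrow> 'g \<Rightarrow> 'g) \<Rightarrow> 'g \<Rightarrow> ('g \<Rightarrow> 'g) \<Rightarrow> bool" where
  "locally_compact_group mul e iv \<longleftrightarrow>
     (\<forall>x y z. mul (mul x y) z = mul x (mul y z)) \<and>
     (\<forall>x. mul e x = x \<and> mul x e = x) \<and>
     (\<forall>x. mul (iv x) x = e \<and> mul x (iv x) = e) \<and>
     continuous_on UNIV (\<lambda>p::'g \<times> 'g. mul (fst p) (snd p)) \<and>
     continuous_on UNIV iv \<and>
     (\<forall>x. \<exists>(U::'g set) (C::'g set). open U \<and> compact C \<and> x \<in> U \<and> U \<subseteq> C)"

definition compact_subgroup ::
  "('g::topological_space \<Rightarrow> 'g \<Rightarrow> 'g) \<Rightarrow> 'g \<Rightarrow> ('g \<Rightarrow> 'g) \<Rightarrow> 'g set \<Rightarrow> bool" where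
  "compact_subgroup mul e iv K \<longleftrightarrow>
     compact K \<and> e \<in> K \<and> (\<forall>x\<in>K. \<forall>y\<in>K. mul x y \<in> K) \<and> (\<forall>x\<in>K. iv x \<in> K)"

definition left_haar_measure ::
  "('g::topological_space \<Rightarrow> 'g \<Rightarrow> 'g) \<Rightarrow> 'g measure \<Rightarrow> bool" where
  "left_haar_measure mul mu \<longleftrightarrow>
     sets mu = sets borel \<and>
     (\<forall>C. compact C \<longrightarrow> emeasure mu C < \<infinity>) \<and>
     (\<forall>U. open U \<and> U \<noteq> {} \<longrightarrow> emeasure mu U > 0) \<and>
     (\<forall>g. \<forall>A\<in>sets mu. emeasure mu (mul g ` A) = emeasure mu A) \<and>
     (\<forall>A\<in>sets mu. emeasure mu A = (INF U\<in>{U. open U \<and> A \<subseteq> U}. emeasure mu U)) \<and>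
     (\<forall>U. open U \<longrightarrow> emeasure mu U = (SUP C\<in>{C. compact C \<and> C \<subseteq> U}. emeasure mu C))"

text \<open>Normalized Haar measure dk of the compact subgroup K, viewed as a Borel
  probability measure on G concentrated on K and invariant under left translation
  by elements of K.\<close>
definition normalized_haar_on ::
  "('g::topological_space \<Rightarrow> 'g \<Rightarrow> 'g) \<Rightarrow> 'g set \<Rightarrow> 'g measure \<Rightarrow> bool" where
  "normalized_haar_on mul K dk \<longleftrightarrow>
     sets dk = sets borel \<and> emeasure dk UNIV = 1 \<and> emeasure dk (UNIV - K) = 0 \<and>
     (\<forall>k\<in>K. \<forall>A\<in>sets dk. emeasure dk (mul k ` A) = emeasure dk A)"

definition K_central ::
  "('g \<Rightarrow> 'g \<Rightarrow> 'g) \<Rightarrow> 'g set \<Rightarrow> ('g \<Rightarrow> 'c) \<Rightarrow> bool" where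
  "K_central mul K f \<longleftrightarrow> (\<forall>k\<in>K. \<forall>x. f (mul k x) = f (mul x k))"

definition KK_space ::
  "('g::topological_space \<Rightarrow> 'g \<Rightarrow> 'g) \<Rightarrow> 'g set \<Rightarrow> ('g \<Rightarrow> complex) set" where
  "KK_space mul K = {f. continuous_on UNIV f \<and>
       (\<exists>C. compact C \<and> (\<forall>x. x \<notin> C \<longrightarrow> f x = 0)) \<and> K_central mul K f}"

definition convolution ::
  "('g \<Rightarrow> 'g \<Rightarrow> 'g) \<Rightarrow> ('g \<Rightarrow> 'g) \<Rightarrow> 'g measure \<Rightarrow> ('g \<Rightarrow> complex) \<Rightarrow> ('g \<Rightarrow> complex) \<Rightarrow> 'g \<Rightarrow> complex" where
  "convolution mul iv mu f g x = (\<integral>y. f y * g (mul (iv y) x) \<partial>mu)"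

definition central_pair ::
  "('g::topological_space \<Rightarrow> 'g \<Rightarrow> 'g) \<Rightarrow> ('g \<Rightarrow> 'g) \<Rightarrow> 'g measure \<Rightarrow> 'g set \<Rightarrow> bool" where
  "central_pair mul iv mu K \<longleftrightarrow>
     (\<forall>f\<in>KK_space mul K. \<forall>g\<in>KK_space mul K.
        convolution mul iv mu f g = convolution mul iv mu g f)"

end

theory Submission
  imports Defs
begin


locale grp =
  fixes mul :: "'g::t2_space \<Rightarrow> 'g \<Rightarrow> 'g" and e :: 'g and iv :: "'g \<Rightarrow> 'g"
  assumes G: "locally_compact_group mul e iv"
begin

lemma assoc: "mul (mul x y) z = mul x (mul y z)"
  using G unfolding locally_compact_group_def by blast
lemma lid[simp]: "mul e x = x" using G unfolding locally_compact_group_def by blast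
lemma rid[simp]: "mul x e = x" using G unfolding locally_compact_group_def by blast
lemma linv[simp]: "mul (iv x) x = e" using G unfolding locally_compact_group_def by blast
lemma rinv[simp]: "mul x (iv x) = e" using G unfolding locally_compact_group_def by blast
lemma linv2[simp]: "mul (iv x) (mul x y) = y" by (metis assoc lid linv)
lemma rinv2[simp]: "mul x (mul (iv x) y) = y" by (metis assoc lid rinv)
lemma inv_unique: "mul x y = e \<Longrightarrow> iv x = y"
  by (metis linv2 rid)
lemma iv_iv[simp]: "iv (iv x) = x" by (metis inv_unique linv)
lemma iv_mul: "iv (mul a b) = mul (iv b) (iv a)"
  by (rule inv_unique) (simp add: assoc)
lemma iv_e[simp]: "iv e = e" by (metis inv_unique lid)
lemma lcancel: "mul a x = mul a y \<longleftrightarrow> x = y" by (metis linv2)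
lemma rcancel: "mul x a = mul y a \<longleftrightarrow> x = y" by (metis assoc rid rinv)

lemma cont_mul2: "continuous_on UNIV (\<lambda>p::'g\<times>'g. mul (fst p) (snd p))"
  using G unfolding locally_compact_group_def by blast
lemma cont_iv2: "continuous_on UNIV iv"
  using G unfolding locally_compact_group_def by blast
lemma loc_compact: "\<exists>(U::'g set) (C::'g set). open U \<and> compact C \<and> x \<in> U \<and> U \<subseteq> C"
  using G unfolding locally_compact_group_def by blast

lemma cont_mul: "continuous_on S f \<Longrightarrow> continuous_on S g \<Longrightarrow> continuous_on S (\<lambda>p. mul (f p) (g p))"
  using continuous_on_compose2[OF cont_mul2 continuous_on_Pair, of S f g] by auto
lemma cont_iv: "continuous_on S f \<Longrightarrow> continuous_on S (\<lambda>p. iv (f p))"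
  using continuous_on_compose2[OF cont_iv2, of S f] by auto

lemmas cont_intros = cont_mul cont_iv continuous_on_const continuous_on_id continuous_on_fst continuous_on_snd

lemma Hausdorff_eu: "Hausdorff_space (euclidean::'g topology)"
  unfolding Hausdorff_space_def disjnt_def by (simp, meson hausdorff)

lemma lc_eu: "locally_compact_space (euclidean::'g topology)"
  unfolding locally_compact_space_def using loc_compact by auto

lemma creg: "completely_regular_space (euclidean::'g topology)"
  using locally_compact_regular_imp_completely_regular_space[OF lc_eu] Hausdorff_eu by blast

end



definition cfin :: "'a::t2_space measure \<Rightarrow> 'a set \<Rightarrow> bool" where
  "cfin M C \<longleftrightarrow> sets M = sets borel \<and> emeasure M UNIV < \<infinity> \<and> compact C \<and> emeasure M (UNIV - C) = 0"

lemma cfin_sets: "cfin M C \<Longrightarrow> sets M = sets borel" by (simp add: cfin_def)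
lemma cfin_space: "cfin M C \<Longrightarrow> space M = UNIV"
  by (metis cfin_sets sets_eq_imp_space_eq space_borel)
lemma cfin_finite: "cfin M C \<Longrightarrow> finite_measure M"
  using cfin_space[of M C] by (intro finite_measureI) (auto simp: cfin_def)
lemma cfin_AE: "cfin M C \<Longrightarrow> AE x in M. x \<in> C"
proof -
  assume c: "cfin M C"
  have "closed C" using c by (simp add: cfin_def compact_imp_closed)
  then have "UNIV - C \<in> sets M" using c by (simp add: cfin_sets)
  then have "UNIV - C \<in> null_sets M" using c by (simp add: null_setsI cfin_def)
  then show ?thesis by (rule AE_I') (auto simp: cfin_space[OF c])
qed
lemma cfin_meas: "cfin M C \<Longrightarrow> continuous_on UNIV f \<Longrightarrow> f \<in> borel_measurable M"
  using borel_measurable_continuous_onI measurable_cong_sets cfin_sets by metis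

lemma cfin_int:
  fixes f :: "'a::t2_space \<Rightarrow> 'b::{banach,second_countable_topology}"
  assumes c: "cfin M C" and f: "continuous_on UNIV f"
  shows "integrable M f"
proof -
  have "compact (f ` C)" using c f by (auto simp: cfin_def intro: compact_continuous_image continuous_on_subset)
  then obtain B where B: "\<And>y. y \<in> f ` C \<Longrightarrow> norm y \<le> B"
    by (meson bounded_iff compact_imp_bounded)
  interpret finite_measure M using cfin_finite[OF c] .
  show ?thesis
    by (rule integrable_const_bound[of f B]) (use cfin_AE[OF c] B cfin_meas[OF c f] in auto)
qed

lemma cfin_norm_bound:
  fixes f :: "'a::t2_space \<Rightarrow> 'b::{banach,second_countable_topology}"
  assumes c: "cfin M C" and f: "integrable M f" and B: "\<And>x. x \<in> C \<Longrightarrow> norm (f x) \<le> B"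
  shows "norm (integral\<^sup>L M f) \<le> B * measure M UNIV"
proof -
  interpret finite_measure M using cfin_finite[OF c] .
  have "norm (integral\<^sup>L M f) \<le> (\<integral>x. norm (f x) \<partial>M)" by (rule integral_norm_bound)
  also have "\<dots> \<le> (\<integral>x. B \<partial>M)"
    by (rule integral_mono_AE) (use f cfin_AE[OF c] B in auto)
  also have "\<dots> = B * measure M UNIV" by (simp add: cfin_space[OF c])
  finally show ?thesis .
qed

lemma cfin_cont:
  fixes F :: "'p::t2_space \<times> 'a::t2_space \<Rightarrow> 'b::{banach,second_countable_topology}"
  assumes c: "cfin M C" and F: "continuous_on UNIV F"
  shows "continuous_on UNIV (\<lambda>p. \<integral>b. F (p,b) \<partial>M)"
proof -
  interpret finite_measure M using cfin_finite[OF c] .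
  have Fp: "continuous_on UNIV (\<lambda>b. F (p, b))" for p
    by (rule continuous_on_compose2[OF F]) (auto intro!: continuous_intros)
  have intF: "integrable M (\<lambda>b. F (p, b))" for p by (rule cfin_int[OF c Fp])
  define m where "m = measure M UNIV"
  have m0: "m \<ge> 0" by (simp add: m_def)
  show ?thesis
  proof (rule continuous_at_imp_continuous_on, intro ballI)
    fix p0 :: 'p
    show "isCont (\<lambda>p. \<integral>b. F (p,b) \<partial>M) p0" unfolding isCont_def
    proof (rule tendsto_at_iff_tendsto_nhds[THEN iffD2], rule tendstoI)
      fix eps :: real assume eps: "eps > 0"
      define d where "d = eps / (m + 1)"
      have d: "d > 0" using eps m0 by (simp add: d_def)
      define W where "W = {q::'p\<times>'a. dist (F q) (F (p0, snd q)) < d}"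
      have "open W"
      proof -
        have "continuous_on UNIV (\<lambda>q::'p\<times>'a. dist (F q) (F (p0, snd q)))"
          by (intro continuous_intros F continuous_on_compose2[OF F]) auto
        then have "open ((\<lambda>q::'p\<times>'a. dist (F q) (F (p0, snd q))) -` {..<d})"
          by (intro open_vimage) auto
        moreover have "W = (\<lambda>q::'p\<times>'a. dist (F q) (F (p0, snd q))) -` {..<d}"
          by (auto simp: W_def)
        ultimately show ?thesis by simp
      qed
      moreover have "{p0} \<times> C \<subseteq> W" using d by (auto simp: W_def)
      ultimately obtain X0 where X0: "p0 \<in> X0" "open X0" "X0 \<times> C \<subseteq> W"
        using Elementary_Topology.tube_lemma[of C W p0] c by (auto simp: cfin_def)
      have "dist (\<integral>b. F (p,b) \<partial>M) (\<integral>b. F (p0,b) \<partial>M) < eps" if p: "p \<in> X0" for p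
      proof -
        have "dist (\<integral>b. F (p,b) \<partial>M) (\<integral>b. F (p0,b) \<partial>M) = norm (\<integral>b. F (p,b) - F (p0,b) \<partial>M)"
          by (simp add: dist_norm intF)
        also have "\<dots> \<le> d * m" unfolding m_def
          by (rule cfin_norm_bound[OF c]) (use intF X0 p in \<open>auto simp: W_def dist_norm\<close>)
        also have "\<dots> < eps" using eps m0 by (simp add: d_def field_simps)
        finally show ?thesis .
      qed
      then show "\<forall>\<^sub>F p in nhds p0. dist (\<integral>b. F (p,b) \<partial>M) (\<integral>b. F (p0,b) \<partial>M) < eps"
        using X0 by (auto simp: eventually_nhds)
    qed
  qed
qed




lemma sep_fun:
  assumes cr: "completely_regular_space (euclidean::'a::t2_space topology)" and ne: "a \<noteq> (a'::'a)"
  shows "\<exists>\<phi>::'a\<Rightarrow>real. continuous_on UNIV \<phi> \<and> \<phi> a \<noteq> \<phi> a'"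
proof -
  have "closedin euclidean {a'}" by simp
  then obtain f where f: "continuous_map euclidean (top_of_set {0..1}) f" "f a = (0::real)" "f ` {a'} \<subseteq> {1}"
    using cr ne unfolding completely_regular_space_def by (metis Diff_iff UNIV_I singletonD topspace_euclidean)
  then have "continuous_on UNIV f"
    using continuous_map_into_fulltopology continuous_map_iff_continuous2 by blast
  with f show ?thesis by (intro exI[of _ f]) auto
qed

lemma prod_meas_real:
  fixes F :: "'a::t2_space \<times> 'a \<Rightarrow> real"
  assumes cr: "completely_regular_space (euclidean::'a topology)"
    and F: "continuous_on UNIV F" and A: "compact A" and B: "compact B"
  shows "(\<lambda>p. indicator (A \<times> B) p * F p) \<in> borel_measurable (borel \<Otimes>\<^sub>M borel)"
proof -
  define R where "R = {f::'a\<times>'a\<Rightarrow>real. continuous_on UNIV f \<and> f \<in> borel_measurable (borel \<Otimes>\<^sub>M borel)}"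
  interpret function_ring_on R "A \<times> B"
  proof
    show "compact (A \<times> B)" using A B by (rule compact_Times)
    show "continuous_on (A \<times> B) f" if "f \<in> R" for f
      using that continuous_on_subset by (auto simp: R_def)
    show "(\<lambda>x. f x + g x) \<in> R" if "f \<in> R" "g \<in> R" for f g
      using that unfolding R_def by (blast intro: continuous_on_add borel_measurable_add)
    show "(\<lambda>x. f x * g x) \<in> R" if "f \<in> R" "g \<in> R" for f g
      using that unfolding R_def by (blast intro: continuous_on_mult borel_measurable_times)
    show "(\<lambda>_. c) \<in> R" for c unfolding R_def by (blast intro: continuous_on_const borel_measurable_const)
    show "\<exists>f\<in>R. f x \<noteq> f y" if "x \<in> A \<times> B" "y \<in> A \<times> B" "x \<noteq> y" for x y
    proof (cases "fst x = fst y")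
      case False
      then obtain \<phi> :: "'a \<Rightarrow> real" where \<phi>: "continuous_on UNIV \<phi>" "\<phi> (fst x) \<noteq> \<phi> (fst y)"
        using sep_fun[OF cr] by meson
      have "continuous_on UNIV (\<lambda>p::'a\<times>'a. \<phi> (fst p))"
        using continuous_on_compose2[OF \<phi>(1) continuous_on_fst[OF continuous_on_id]] by simp
      moreover have "(\<lambda>p::'a\<times>'a. \<phi> (fst p)) \<in> borel_measurable (borel \<Otimes>\<^sub>M borel)"
        by (rule measurable_compose[OF measurable_fst borel_measurable_continuous_onI[OF \<phi>(1)]])
      ultimately have "(\<lambda>p. \<phi> (fst p)) \<in> R" unfolding R_def by blast
      then show ?thesis using \<phi>(2) by (intro bexI[of _ "\<lambda>p. \<phi> (fst p)"]) auto
    next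
      case True
      then have "snd x \<noteq> snd y" using that by (simp add: prod_eq_iff)
      then obtain \<phi> :: "'a \<Rightarrow> real" where \<phi>: "continuous_on UNIV \<phi>" "\<phi> (snd x) \<noteq> \<phi> (snd y)"
        using sep_fun[OF cr] by meson
      have "continuous_on UNIV (\<lambda>p::'a\<times>'a. \<phi> (snd p))"
        using continuous_on_compose2[OF \<phi>(1) continuous_on_snd[OF continuous_on_id]] by simp
      moreover have "(\<lambda>p::'a\<times>'a. \<phi> (snd p)) \<in> borel_measurable (borel \<Otimes>\<^sub>M borel)"
        by (rule measurable_compose[OF measurable_snd borel_measurable_continuous_onI[OF \<phi>(1)]])
      ultimately have "(\<lambda>p. \<phi> (snd p)) \<in> R" unfolding R_def by blast
      then show ?thesis using \<phi>(2) by (intro bexI[of _ "\<lambda>p. \<phi> (snd p)"]) auto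
    qed
  qed
  have "\<forall>n::nat. \<exists>g\<in>R. \<forall>x\<in>A \<times> B. \<bar>F x - g x\<bar> < 1 / Suc n"
    using Stone_Weierstrass_basic[OF continuous_on_subset[OF F]] by auto
  then obtain g where g: "\<And>n. g n \<in> R" "\<And>n x. x \<in> A \<times> B \<Longrightarrow> \<bar>F x - g n x\<bar> < 1 / Suc n"
    by metis
  show ?thesis
  proof (rule borel_measurable_LIMSEQ_real[where u="\<lambda>n p. indicator (A \<times> B) p * g n p"])
    show "(\<lambda>p. indicator (A \<times> B) p * g n p) \<in> borel_measurable (borel \<Otimes>\<^sub>M borel)" for n
    proof -
      have "A \<times> B \<in> sets (borel \<Otimes>\<^sub>M borel)"
        using A B by (intro pair_measureI) (auto simp: compact_imp_closed)
      then show ?thesis using g(1)[of n] by (auto simp: R_def)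
    qed
    fix p :: "'a \<times> 'a"
    show "(\<lambda>n. indicator (A \<times> B) p * g n p) \<longlonglongrightarrow> indicator (A \<times> B) p * F p"
    proof (cases "p \<in> A \<times> B")
      case False then show ?thesis by simp
    next
      case True
      have "(\<lambda>n. g n p) \<longlonglongrightarrow> F p"
      proof (rule LIMSEQ_I)
        fix r :: real assume r: "0 < r"
        obtain N :: nat where N: "inverse (Suc N) < r" using r reals_Archimedean by blast
        have "norm (g n p - F p) < r" if "N \<le> n" for n
        proof -
          have "1 / real (Suc n) \<le> 1 / real (Suc N)" using that by (simp add: frac_le)
          then show ?thesis using g(2)[OF True, of n] N by (simp add: inverse_eq_divide abs_minus_commute)
        qed
        then show "\<exists>no. \<forall>n\<ge>no. norm (g n p - F p) < r" by blast
      qed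
      then show ?thesis using True by simp
    qed
  qed
qed

lemma prod_meas:
  fixes F :: "'a::t2_space \<times> 'a \<Rightarrow> complex"
  assumes cr: "completely_regular_space (euclidean::'a topology)"
    and F: "continuous_on UNIV F" and A: "compact A" and B: "compact B"
  shows "(\<lambda>p. indicator (A \<times> B) p * F p) \<in> borel_measurable (borel \<Otimes>\<^sub>M borel)"
proof -
  have 1: "(\<lambda>p. indicator (A \<times> B) p * Re (F p)) \<in> borel_measurable (borel \<Otimes>\<^sub>M borel)"
    by (rule prod_meas_real[OF cr _ A B]) (intro continuous_intros F)
  have 2: "(\<lambda>p. indicator (A \<times> B) p * Im (F p)) \<in> borel_measurable (borel \<Otimes>\<^sub>M borel)"
    by (rule prod_meas_real[OF cr _ A B]) (intro continuous_intros F)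
  have "(\<lambda>p. Re (indicator (A \<times> B) p * F p)) = (\<lambda>p. indicator (A \<times> B) p * Re (F p))"
    "(\<lambda>p. Im (indicator (A \<times> B) p * F p)) = (\<lambda>p. indicator (A \<times> B) p * Im (F p))"
    by (auto simp: indicator_def)
  then show ?thesis using 1 2 by (simp add: borel_measurable_complex_iff)
qed

lemma fubini_cont:
  fixes F :: "'a::t2_space \<times> 'a \<Rightarrow> complex"
  assumes cr: "completely_regular_space (euclidean::'a topology)"
    and M: "cfin M A" and N: "cfin N B" and F: "continuous_on UNIV F"
  shows "(\<integral>a. \<integral>b. F (a,b) \<partial>N \<partial>M) = (\<integral>b. \<integral>a. F (a,b) \<partial>M \<partial>N)"
proof -
  interpret M: finite_measure M using cfin_finite[OF M] .
  interpret N: finite_measure N using cfin_finite[OF N] .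
  interpret P: pair_sigma_finite M N by unfold_locales
  interpret PF: finite_measure "M \<Otimes>\<^sub>M N"
    by (rule finite_measure_pair_measure) unfold_locales
  define H where "H p = indicator (A \<times> B) p * F p" for p
  have AB: "compact A" "compact B" using M N by (auto simp: cfin_def)
  have Hm: "H \<in> borel_measurable (M \<Otimes>\<^sub>M N)"
  proof -
    have "sets (M \<Otimes>\<^sub>M N) = sets (borel \<Otimes>\<^sub>M borel)"
      by (rule sets_pair_measure_cong) (use M N in \<open>auto simp: cfin_sets\<close>)
    then show ?thesis unfolding H_def
      using prod_meas[OF cr F AB] measurable_cong_sets by blast
  qed
  have "compact (F ` (A \<times> B))"
    using AB F by (auto intro: compact_continuous_image continuous_on_subset compact_Times)
  then obtain C where C: "\<And>y. y \<in> F ` (A \<times> B) \<Longrightarrow> norm y \<le> C"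
    by (meson bounded_iff compact_imp_bounded)
  have Hb: "norm (H p) \<le> max C 0" for p
    using C[of "F p"] by (auto simp: H_def indicator_def)
  have Hi: "integrable (M \<Otimes>\<^sub>M N) (\<lambda>(a,b). H (a,b))"
    by (rule PF.integrable_const_bound[where B="max C 0"]) (use Hb Hm in auto)
  have eq: "(\<integral>b. \<integral>a. H (a,b) \<partial>M \<partial>N) = (\<integral>a. \<integral>b. H (a,b) \<partial>N \<partial>M)"
    using P.Fubini_integral[of "\<lambda>a b. H (a,b)"] Hi by simp
  have Hm1: "(\<lambda>b. H (a,b)) \<in> borel_measurable N" for a
    using measurable_Pair2[OF Hm, of a] cfin_space[OF M] by simp
  have Hm2: "(\<lambda>a. H (a,b)) \<in> borel_measurable M" for b
    using measurable_Pair1[OF Hm, of b] cfin_space[OF N] by simp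
  have Fm1: "(\<lambda>b. F (a,b)) \<in> borel_measurable N" for a
    by (rule cfin_meas[OF N], rule continuous_on_compose2[OF F]) (auto intro!: continuous_intros)
  have Fm2: "(\<lambda>a. F (a,b)) \<in> borel_measurable M" for b
    by (rule cfin_meas[OF M], rule continuous_on_compose2[OF F]) (auto intro!: continuous_intros)
  have 1: "(\<integral>a. \<integral>b. H (a,b) \<partial>N \<partial>M) = (\<integral>a. \<integral>b. F (a,b) \<partial>N \<partial>M)"
  proof (rule integral_cong_AE)
    show "AE a in M. (\<integral>b. H (a,b) \<partial>N) = (\<integral>b. F (a,b) \<partial>N)"
      using cfin_AE[OF M]
    proof eventually_elim
      case (elim a)
      show ?case
      proof (rule integral_cong_AE[OF Hm1 Fm1])
        show "AE z in N. H (a,z) = F (a,z)" using cfin_AE[OF N]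
          by eventually_elim (use elim in \<open>simp add: H_def\<close>)
      qed
    qed
  next
    show "(\<lambda>a. \<integral>b. H (a,b) \<partial>N) \<in> borel_measurable M"
      by (rule N.borel_measurable_lebesgue_integral[of "\<lambda>a b. H (a,b)"]) (use Hm in \<open>simp add: case_prod_beta'\<close>)
    show "(\<lambda>a. \<integral>b. F (a,b) \<partial>N) \<in> borel_measurable M"
      by (rule cfin_meas[OF M], rule cfin_cont[OF N F])
  qed
  have 2: "(\<integral>b. \<integral>a. H (a,b) \<partial>M \<partial>N) = (\<integral>b. \<integral>a. F (a,b) \<partial>M \<partial>N)"
  proof (rule integral_cong_AE)
    show "AE b in N. (\<integral>a. H (a,b) \<partial>M) = (\<integral>a. F (a,b) \<partial>M)"
      using cfin_AE[OF N]
    proof eventually_elim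
      case (elim b)
      show ?case
      proof (rule integral_cong_AE[OF Hm2 Fm2])
        show "AE z in M. H (z,b) = F (z,b)" using cfin_AE[OF M]
          by eventually_elim (use elim in \<open>simp add: H_def\<close>)
      qed
    qed
  next
    show "(\<lambda>b. \<integral>a. H (a,b) \<partial>M) \<in> borel_measurable N"
    proof -
      have "(\<lambda>(b,a). H (a,b)) \<in> borel_measurable (N \<Otimes>\<^sub>M M)"
        using measurable_compose[OF measurable_pair_swap' Hm] by (simp add: case_prod_beta)
      then show ?thesis by (rule M.borel_measurable_lebesgue_integral[of "\<lambda>b a. H (a,b)", simplified])
    qed
    have "continuous_on UNIV (\<lambda>q. F (snd q, fst q))"
      by (rule continuous_on_compose2[OF F]) (auto intro!: continuous_intros)
    then show "(\<lambda>b. \<integral>a. F (a,b) \<partial>M) \<in> borel_measurable N"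
      using cfin_meas[OF N cfin_cont[OF M, of "\<lambda>q. F (snd q, fst q)"]] by simp
  qed
  show ?thesis using eq 1 2 by simp
qed




locale setting = grp mul e iv
  for mul :: "'g::t2_space \<Rightarrow> 'g \<Rightarrow> 'g" and e iv +
  fixes mu dk :: "'g measure" and K :: "'g set"
  assumes H: "left_haar_measure mul mu" and KS: "compact_subgroup mul e iv K"
    and D: "normalized_haar_on mul K dk"
begin

lemma K_compact: "compact K" using KS by (simp add: compact_subgroup_def)
lemma K_e[simp]: "e \<in> K" using KS by (simp add: compact_subgroup_def)
lemma K_mul[simp]: "a \<in> K \<Longrightarrow> b \<in> K \<Longrightarrow> mul a b \<in> K" using KS by (simp add: compact_subgroup_def)
lemma K_iv[simp]: "a \<in> K \<Longrightarrow> iv a \<in> K" using KS by (simp add: compact_subgroup_def)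

lemma dk_cfin: "cfin dk K"
  using D K_compact by (simp add: cfin_def normalized_haar_on_def)
lemma mu_sets: "sets mu = sets borel" using H[unfolded left_haar_measure_def] by (rule conjunct1)
lemma mu_space: "space mu = UNIV" by (metis mu_sets sets_eq_imp_space_eq space_borel)
lemma mu_compact: "compact C \<Longrightarrow> emeasure mu C < \<infinity>"
  using H[unfolded left_haar_measure_def, THEN conjunct2, THEN conjunct1] by blast
lemma mu_open: "open U \<Longrightarrow> U \<noteq> {} \<Longrightarrow> emeasure mu U > 0"
  using H[unfolded left_haar_measure_def, THEN conjunct2, THEN conjunct2, THEN conjunct1] by blast
lemma mu_inv: "A \<in> sets mu \<Longrightarrow> emeasure mu (mul g ` A) = emeasure mu A"
  using H[unfolded left_haar_measure_def, THEN conjunct2, THEN conjunct2, THEN conjunct2, THEN conjunct1] by blast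
lemma dk_inv: "k \<in> K \<Longrightarrow> A \<in> sets dk \<Longrightarrow> emeasure dk (mul k ` A) = emeasure dk A"
  using D by (simp add: normalized_haar_on_def)
lemma dk_sets: "sets dk = sets borel" using D by (simp add: normalized_haar_on_def)
lemma dk_space: "space dk = UNIV" by (metis dk_sets sets_eq_imp_space_eq space_borel)
lemma dk_UNIV: "measure dk UNIV = 1" using D by (simp add: normalized_haar_on_def measure_def)

lemma meas_mu: "measurable mu N = measurable borel N"
  by (rule measurable_cong_sets[OF mu_sets refl])
lemma meas_dk: "measurable dk N = measurable borel N"
  by (rule measurable_cong_sets[OF dk_sets refl])

lemma mul_meas: "mul a \<in> borel_measurable borel"
  by (rule borel_measurable_continuous_onI) (auto intro: cont_intros)

lemma preimage_mul: "mul a -` A = mul (iv a) ` A"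
proof safe
  fix x assume "mul a x \<in> A" then show "x \<in> mul (iv a) ` A" by (intro image_eqI[of _ _ "mul a x"]) auto
qed auto

lemma distr_mu: "distr mu borel (mul a) = mu"
proof (rule measure_eqI)
  show "sets (distr mu borel (mul a)) = sets mu" by (simp add: mu_sets)
  fix A assume "A \<in> sets (distr mu borel (mul a))"
  then have A: "A \<in> sets mu" by (simp add: mu_sets)
  have "emeasure (distr mu borel (mul a)) A = emeasure mu (mul a -` A \<inter> space mu)"
    by (rule emeasure_distr) (use A mul_meas in \<open>auto simp: mu_sets meas_mu\<close>)
  also have "\<dots> = emeasure mu A" by (simp add: mu_space preimage_mul mu_inv[OF A])
  finally show "emeasure (distr mu borel (mul a)) A = emeasure mu A" .
qed

lemma distr_dk: assumes k: "k \<in> K" shows "distr dk borel (mul k) = dk"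
proof (rule measure_eqI)
  show "sets (distr dk borel (mul k)) = sets dk" by (simp add: dk_sets)
  fix A assume "A \<in> sets (distr dk borel (mul k))"
  then have A: "A \<in> sets dk" by (simp add: dk_sets)
  have "emeasure (distr dk borel (mul k)) A = emeasure dk (mul k -` A \<inter> space dk)"
    by (rule emeasure_distr) (use A mul_meas in \<open>auto simp: dk_sets meas_dk\<close>)
  also have "\<dots> = emeasure dk A" by (simp add: dk_space preimage_mul dk_inv[OF _ A] k)
  finally show "emeasure (distr dk borel (mul k)) A = emeasure dk A" .
qed

lemma mu_linv:
  fixes f :: "'g \<Rightarrow> 'b::{banach,second_countable_topology}"
  assumes f: "f \<in> borel_measurable borel"
  shows "(\<integral>u. f (mul a u) \<partial>mu) = integral\<^sup>L mu f"
proof -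
  have "integral\<^sup>L mu f = integral\<^sup>L (distr mu borel (mul a)) f" by (simp add: distr_mu)
  also have "\<dots> = (\<integral>u. f (mul a u) \<partial>mu)"
    by (rule integral_distr) (use mul_meas f in \<open>auto simp: mu_sets meas_mu\<close>)
  finally show ?thesis by simp
qed

lemma dk_linv:
  fixes f :: "'g \<Rightarrow> 'b::{banach,second_countable_topology}"
  assumes f: "f \<in> borel_measurable borel" and k: "k \<in> K"
  shows "(\<integral>u. f (mul k u) \<partial>dk) = integral\<^sup>L dk f"
proof -
  have "integral\<^sup>L dk f = integral\<^sup>L (distr dk borel (mul k)) f" by (simp add: distr_dk k)
  also have "\<dots> = (\<integral>u. f (mul k u) \<partial>dk)"
    by (rule integral_distr) (use mul_meas f in \<open>auto simp: dk_sets meas_dk\<close>)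
  finally show ?thesis by simp
qed

definition Mc :: "'g set \<Rightarrow> 'g measure" where
  "Mc C = density mu (\<lambda>x. ennreal (indicator C x))"

lemma closed_borel: "compact (C::'g set) \<Longrightarrow> C \<in> sets borel"
  by (rule borel_closed[OF compact_imp_closed])

lemma Mc_emeasure: assumes C: "compact C" and A: "A \<in> sets borel"
  shows "emeasure (Mc C) A = emeasure mu (C \<inter> A)"
proof -
  have Cb[measurable]: "C \<in> sets borel" by (rule closed_borel[OF C])
  have m: "(\<lambda>x. ennreal (indicator C x)) \<in> borel_measurable mu" unfolding meas_mu by measurable
  have "emeasure (Mc C) A = (\<integral>\<^sup>+ x. ennreal (indicator C x) * indicator A x \<partial>mu)"
    unfolding Mc_def by (rule emeasure_density[OF m]) (simp add: A mu_sets)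
  also have "\<dots> = (\<integral>\<^sup>+ x. indicator (C \<inter> A) x \<partial>mu)"
    by (intro nn_integral_cong) (simp split: split_indicator)
  also have "\<dots> = emeasure mu (C \<inter> A)"
    using A Cb by (intro nn_integral_indicator) (simp add: mu_sets)
  finally show ?thesis .
qed

lemma Mc_cfin: assumes C: "compact C" shows "cfin (Mc C) C"
  unfolding cfin_def
proof (intro conjI)
  show "sets (Mc C) = sets borel" by (simp add: Mc_def mu_sets)
  show "emeasure (Mc C) UNIV < \<infinity>" using Mc_emeasure[OF C, of UNIV] mu_compact[OF C] by simp
  show "emeasure (Mc C) (UNIV - C) = 0"
    using Mc_emeasure[OF C, of "UNIV - C"] C by (simp add: compact_imp_closed)
qed (rule C)

lemma mu_Mc:
  fixes f :: "'g \<Rightarrow> 'b::{banach,second_countable_topology}"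
  assumes C: "compact C" and f: "f \<in> borel_measurable borel" and z: "\<And>x. x \<notin> C \<Longrightarrow> f x = 0"
  shows "integral\<^sup>L mu f = integral\<^sup>L (Mc C) f"
proof -
  have "integral\<^sup>L (Mc C) f = (\<integral>x. indicator C x *\<^sub>R f x \<partial>mu)"
    unfolding Mc_def by (rule integral_density) (use f closed_borel[OF C] in \<open>auto simp: mu_sets meas_mu\<close>)
  also have "(\<lambda>x. indicator C x *\<^sub>R f x) = f" by (auto simp: indicator_def z)
  finally show ?thesis by simp
qed

lemma mu_int:
  fixes f :: "'g \<Rightarrow> 'b::{banach,second_countable_topology}"
  assumes C: "compact C" and f: "continuous_on UNIV f" and z: "\<And>x. x \<notin> C \<Longrightarrow> f x = 0"
  shows "integrable mu f"
proof -
  have fm: "f \<in> borel_measurable borel" using f by (rule borel_measurable_continuous_onI)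
  have "integrable (Mc C) f" by (rule cfin_int[OF Mc_cfin[OF C] f])
  then have "integrable mu (\<lambda>x. indicator C x *\<^sub>R f x)"
    unfolding Mc_def by (subst (asm) integrable_density) (use fm closed_borel[OF C] in \<open>auto simp: mu_sets meas_mu\<close>)
  also have "(\<lambda>x. indicator C x *\<^sub>R f x) = f" by (auto simp: indicator_def z)
  finally show ?thesis .
qed

end



context setting begin

lemma dk_int: "continuous_on UNIV f \<Longrightarrow> integrable dk (f::'g \<Rightarrow> 'b::{banach,second_countable_topology})"
  by (rule cfin_int[OF dk_cfin])
lemma dk_AE: "AE m in dk. m \<in> K" by (rule cfin_AE[OF dk_cfin])
lemma dk_const[simp]: "(\<integral>m. c \<partial>dk) = (c::'b::{banach,second_countable_topology})"
  by (simp add: dk_UNIV dk_space)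
lemma dk_cong:
  assumes "f \<in> borel_measurable borel" "g \<in> borel_measurable borel" "\<And>m. m \<in> K \<Longrightarrow> f m = g m"
  shows "integral\<^sup>L dk f = integral\<^sup>L dk g"
proof -
  have "AE m in dk. f m = g m" using dk_AE by eventually_elim (use assms in simp)
  moreover have "f \<in> borel_measurable dk" "g \<in> borel_measurable dk" using assms(1,2) by (simp_all add: meas_dk)
  ultimately show ?thesis by (intro integral_cong_AE) auto
qed
lemma dk_cong_c:
  assumes "continuous_on UNIV f" "continuous_on UNIV g" "\<And>m. m \<in> K \<Longrightarrow> f m = g m"
  shows "integral\<^sup>L dk f = integral\<^sup>L dk g"
  using dk_cong[OF borel_measurable_continuous_onI[OF assms(1)] borel_measurable_continuous_onI[OF assms(2)] assms(3)] .
lemma dk_bound: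
  fixes f :: "'g \<Rightarrow> 'b::{banach,second_countable_topology}"
  assumes "integrable dk f" "\<And>m. m \<in> K \<Longrightarrow> norm (f m) \<le> B"
  shows "norm (integral\<^sup>L dk f) \<le> B"
  using cfin_norm_bound[OF dk_cfin assms] by (simp add: dk_UNIV)

lemma mu_meas_cont: "continuous_on UNIV f \<Longrightarrow> f \<in> borel_measurable borel"
  by (rule borel_measurable_continuous_onI)

lemma mu_int_Mc:
  fixes f :: "'g \<Rightarrow> 'b::{banach,second_countable_topology}"
  assumes C: "compact C" and f: "continuous_on UNIV f" and z: "\<And>x. x \<notin> C \<Longrightarrow> f x = 0"
  shows "integral\<^sup>L mu f = integral\<^sup>L (Mc C) f"
  by (rule mu_Mc[OF C mu_meas_cont[OF f] z])

lemma mu_cont: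
  fixes F :: "'p::t2_space \<times> 'g \<Rightarrow> 'b::{banach,second_countable_topology}"
  assumes C: "compact C" and F: "continuous_on UNIV F" and z: "\<And>p b. b \<notin> C \<Longrightarrow> F (p,b) = 0"
  shows "continuous_on UNIV (\<lambda>p. \<integral>b. F (p,b) \<partial>mu)"
proof -
  have Fp: "continuous_on UNIV (\<lambda>b. F (p, b))" for p
    by (rule continuous_on_compose2[OF F]) (auto intro!: continuous_intros)
  have eq: "(\<lambda>p. \<integral>b. F (p,b) \<partial>mu) = (\<lambda>p. \<integral>b. F (p,b) \<partial>Mc C)"
    using mu_int_Mc[OF C Fp] z by auto
  show ?thesis unfolding eq by (rule cfin_cont[OF Mc_cfin[OF C] F])
qed

lemma mu_fub:
  fixes F :: "'g \<times> 'g \<Rightarrow> complex"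
  assumes A: "compact A" and B: "compact B" and F: "continuous_on UNIV F"
    and z: "\<And>a b. a \<notin> A \<or> b \<notin> B \<Longrightarrow> F (a,b) = 0"
  shows "(\<integral>a. \<integral>b. F (a,b) \<partial>mu \<partial>mu) = (\<integral>b. \<integral>a. F (a,b) \<partial>mu \<partial>mu)"
proof -
  have F1: "continuous_on UNIV (\<lambda>b. F (a, b))" for a
    by (rule continuous_on_compose2[OF F]) (auto intro!: continuous_intros)
  have F2: "continuous_on UNIV (\<lambda>a. F (a, b))" for b
    by (rule continuous_on_compose2[OF F]) (auto intro!: continuous_intros)
  have Fs: "continuous_on UNIV (\<lambda>q. F (snd q, fst q))"
    by (rule continuous_on_compose2[OF F]) (auto intro!: continuous_intros)
  have i1: "(\<integral>b. F (a,b) \<partial>mu) = (\<integral>b. F (a,b) \<partial>Mc B)" for a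
    by (rule mu_int_Mc[OF B F1]) (use z in auto)
  have i2: "(\<integral>a. F (a,b) \<partial>mu) = (\<integral>a. F (a,b) \<partial>Mc A)" for b
    by (rule mu_int_Mc[OF A F2]) (use z in auto)
  have c1: "continuous_on UNIV (\<lambda>a. \<integral>b. F (a,b) \<partial>Mc B)" by (rule cfin_cont[OF Mc_cfin[OF B] F])
  have c2: "continuous_on UNIV (\<lambda>b. \<integral>a. F (a,b) \<partial>Mc A)"
    using cfin_cont[OF Mc_cfin[OF A] Fs] by simp
  have "(\<integral>a. \<integral>b. F (a,b) \<partial>mu \<partial>mu) = (\<integral>a. \<integral>b. F (a,b) \<partial>Mc B \<partial>mu)" by (simp add: i1)
  also have "\<dots> = (\<integral>a. \<integral>b. F (a,b) \<partial>Mc B \<partial>Mc A)"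
    by (rule mu_int_Mc[OF A c1]) (use z in auto)
  also have "\<dots> = (\<integral>b. \<integral>a. F (a,b) \<partial>Mc A \<partial>Mc B)"
    by (rule fubini_cont[OF creg Mc_cfin[OF A] Mc_cfin[OF B] F])
  also have "\<dots> = (\<integral>b. \<integral>a. F (a,b) \<partial>Mc A \<partial>mu)"
    by (rule mu_int_Mc[OF B c2, symmetric]) (use z in auto)
  also have "\<dots> = (\<integral>b. \<integral>a. F (a,b) \<partial>mu \<partial>mu)" by (simp add: i2)
  finally show ?thesis .
qed

lemma mix_fub:
  fixes F :: "'g \<times> 'g \<Rightarrow> complex"
  assumes A: "compact A" and F: "continuous_on UNIV F"
    and z: "\<And>u m. m \<in> K \<Longrightarrow> u \<notin> A \<Longrightarrow> F (u,m) = 0"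
  shows "(\<integral>u. \<integral>m. F (u,m) \<partial>dk \<partial>mu) = (\<integral>m. \<integral>u. F (u,m) \<partial>Mc A \<partial>dk)"
proof -
  have F1: "continuous_on UNIV (\<lambda>b. F (a, b))" for a
    by (rule continuous_on_compose2[OF F]) (auto intro!: continuous_intros)
  have c1: "continuous_on UNIV (\<lambda>a. \<integral>b. F (a,b) \<partial>dk)" by (rule cfin_cont[OF dk_cfin F])
  have "(\<integral>u. \<integral>m. F (u,m) \<partial>dk \<partial>mu) = (\<integral>u. \<integral>m. F (u,m) \<partial>dk \<partial>Mc A)"
  proof (rule mu_int_Mc[OF A c1])
    fix u assume "u \<notin> A"
    then have "(\<integral>m. F (u,m) \<partial>dk) = (\<integral>m. 0 \<partial>dk)" by (intro dk_cong_c F1 continuous_on_const) (use z in auto)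
    then show "(\<integral>m. F (u,m) \<partial>dk) = 0" by simp
  qed
  also have "\<dots> = (\<integral>m. \<integral>u. F (u,m) \<partial>Mc A \<partial>dk)"
    by (rule fubini_cont[OF creg Mc_cfin[OF A] dk_cfin F])
  finally show ?thesis .
qed

lemma mix_fub2:
  fixes F :: "'g \<times> 'g \<Rightarrow> complex"
  assumes A: "compact A" and F: "continuous_on UNIV F"
    and z: "\<And>u. u \<notin> A \<Longrightarrow> F (u,m) = 0"
  shows "(\<integral>u. F (u,m) \<partial>Mc A) = (\<integral>u. F (u,m) \<partial>mu)"
proof -
  have F2: "continuous_on UNIV (\<lambda>a. F (a, m))"
    by (rule continuous_on_compose2[OF F]) (auto intro!: continuous_intros)
  show ?thesis by (intro mu_int_Mc[OF A F2, symmetric]) (use z in auto)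
qed

end



context setting begin

lemma dk_space_1[simp]: "measure dk (space dk) = 1" by (simp add: dk_space dk_UNIV)

lemmas ci = cont_mul cont_iv continuous_on_fst continuous_on_snd continuous_on_id continuous_on_const

lemma bump_sigma:
  assumes W: "open W" "e \<in> W"
  obtains \<sigma> :: "'g \<Rightarrow> real" and C where "continuous_on UNIV \<sigma>" "\<And>x. 0 \<le> \<sigma> x" "\<sigma> e = 1"
    "\<And>x. x \<notin> W \<Longrightarrow> \<sigma> x = 0" "compact C" "\<And>x. x \<notin> C \<Longrightarrow> \<sigma> x = 0"
proof -
  obtain U C where UC: "open U" "compact C" "e \<in> U" "U \<subseteq> C" using loc_compact by blast
  define W' where "W' = U \<inter> W"
  have "closedin euclidean (UNIV - W')" using UC W by (auto simp: W'_def)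
  moreover have "e \<in> topspace euclidean - (UNIV - W')" using UC W by (auto simp: W'_def)
  ultimately obtain f where f: "continuous_map euclidean (top_of_set {0..1}) f" "f e = (0::real)"
    "f ` (UNIV - W') \<subseteq> {1}"
    using creg unfolding completely_regular_space_def by blast
  have fc: "continuous_on UNIV f"
    using f(1) continuous_map_into_fulltopology continuous_map_iff_continuous2 by blast
  have fr: "f x \<in> {0..1}" for x
    using continuous_map_image_subset_topspace[OF f(1)] by (simp add: image_subset_iff)
  show ?thesis
  proof (rule that[of "\<lambda>x. 1 - f x" C])
    show "continuous_on UNIV (\<lambda>x. 1 - f x)" by (intro continuous_intros fc)
    show "0 \<le> 1 - f x" for x using fr[of x] by auto
    show "1 - f e = 1" using f(2) by simp
    show "1 - f x = 0" if "x \<notin> W" for x using f(3) that by (auto simp: W'_def)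
    show "1 - f x = 0" if "x \<notin> C" for x using f(3) that UC by (auto simp: W'_def)
  qed (rule UC(2))
qed

lemma conj_nbhd:
  assumes V: "open V" "e \<in> V"
  shows "\<exists>V0. open V0 \<and> e \<in> V0 \<and> (\<forall>n\<in>K. \<forall>w\<in>V0. mul n (mul w (iv n)) \<in> V)"
proof -
  define W where "W = (\<lambda>q::'g\<times>'g. mul (snd q) (mul (fst q) (iv (snd q)))) -` V"
  have "open W" unfolding W_def by (intro open_vimage V) (intro ci)
  moreover have "{e} \<times> K \<subseteq> W" using V by (auto simp: W_def)
  ultimately obtain X0 where "e \<in> X0" "open X0" "X0 \<times> K \<subseteq> W"
    using Elementary_Topology.tube_lemma[OF K_compact] by metis
  then show ?thesis by (intro exI[of _ X0]) (auto simp: W_def)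
qed

lemma exists_rho:
  assumes V: "open V" "e \<in> V"
  obtains \<rho> :: "'g \<Rightarrow> real" and C where "continuous_on UNIV \<rho>" "\<And>x. 0 \<le> \<rho> x" "\<rho> e = 1"
    "\<And>x. x \<notin> V \<Longrightarrow> \<rho> x = 0" "compact C" "\<And>x. x \<notin> C \<Longrightarrow> \<rho> x = 0"
    "\<And>k a. k \<in> K \<Longrightarrow> \<rho> (mul k (mul a (iv k))) = \<rho> a"
proof -
  obtain V0 where V0: "open V0" "e \<in> V0" "\<And>n w. n \<in> K \<Longrightarrow> w \<in> V0 \<Longrightarrow> mul n (mul w (iv n)) \<in> V"
    using conj_nbhd[OF V] by blast
  obtain \<sigma> :: "'g \<Rightarrow> real" and C where s: "continuous_on UNIV \<sigma>" "\<And>x. 0 \<le> \<sigma> x" "\<sigma> e = 1"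
    "\<And>x. x \<notin> V0 \<Longrightarrow> \<sigma> x = 0" "compact C" "\<And>x. x \<notin> C \<Longrightarrow> \<sigma> x = 0"
    using bump_sigma[OF V0(1,2)] by blast
  define \<rho> where "\<rho> u = (\<integral>n. \<sigma> (mul (iv n) (mul u n)) \<partial>dk)" for u
  have Fc: "continuous_on UNIV (\<lambda>q::'g\<times>'g. \<sigma> (mul (iv (snd q)) (mul (fst q) (snd q))))"
    by (rule continuous_on_compose2[OF s(1)]) (auto intro!: ci)
  have Fu: "continuous_on UNIV (\<lambda>n. \<sigma> (mul (iv n) (mul u n)))" for u
    by (rule continuous_on_compose2[OF s(1)]) (auto intro!: ci)
  have zero: "\<rho> u = 0" if "\<And>n. n \<in> K \<Longrightarrow> \<sigma> (mul (iv n) (mul u n)) = 0" for u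
  proof -
    have "\<rho> u = (\<integral>n. 0 \<partial>dk)" unfolding \<rho>_def by (rule dk_cong_c[OF Fu continuous_on_const]) (use that in auto)
    then show ?thesis by simp
  qed
  have bk: "u = mul n (mul (mul (iv n) (mul u n)) (iv n))" for u n by (simp add: assoc)
  define C' where "C' = (\<lambda>q::'g\<times>'g. mul (fst q) (mul (snd q) (iv (fst q)))) ` (K \<times> C)"
  show ?thesis
  proof (rule that[of \<rho> C'])
    show "continuous_on UNIV \<rho>" unfolding \<rho>_def using cfin_cont[OF dk_cfin Fc] by simp
    show "0 \<le> \<rho> x" for x unfolding \<rho>_def by (rule Bochner_Integration.integral_nonneg) (rule s(2))
    show "\<rho> e = 1" unfolding \<rho>_def by (simp add: s(3))
    show "\<rho> x = 0" if "x \<notin> V" for x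
    proof (rule zero)
      fix n assume n: "n \<in> K"
      have "mul (iv n) (mul x n) \<notin> V0" using V0(3)[OF n] bk[of x n] that by metis
      then show "\<sigma> (mul (iv n) (mul x n)) = 0" by (rule s(4))
    qed
    show "compact C'" unfolding C'_def
      by (intro compact_continuous_image compact_Times K_compact s(5)) (auto intro!: ci)
    show "\<rho> x = 0" if "x \<notin> C'" for x
    proof (rule zero)
      fix n assume n: "n \<in> K"
      have "mul (iv n) (mul x n) \<notin> C"
      proof
        assume "mul (iv n) (mul x n) \<in> C"
        then have "x \<in> C'" unfolding C'_def using n bk[of x n]
          by (intro image_eqI[of _ _ "(n, mul (iv n) (mul x n))"]) auto
        with that show False by simp
      qed
      then show "\<sigma> (mul (iv n) (mul x n)) = 0" by (rule s(6))
    qed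
    show "\<rho> (mul k (mul a (iv k))) = \<rho> a" if k: "k \<in> K" for k a
    proof -
      define h where "h n = \<sigma> (mul (iv n) (mul a n))" for n
      have hm: "h \<in> borel_measurable borel" unfolding h_def by (rule borel_measurable_continuous_onI[OF Fu])
      have "\<rho> a = (\<integral>n. h (mul (iv k) n) \<partial>dk)" unfolding \<rho>_def h_def[symmetric]
        by (rule dk_linv[OF hm, symmetric]) (simp add: k)
      also have "\<dots> = \<rho> (mul k (mul a (iv k)))" unfolding \<rho>_def h_def
        by (simp add: iv_mul assoc)
      finally show ?thesis by simp
    qed
  qed
qed

lemma R_pos:
  assumes c: "continuous_on UNIV \<rho>" and nn: "\<And>x. 0 \<le> \<rho> x" and r1: "\<rho> e = (1::real)"
    and C: "compact C" and z: "\<And>x. x \<notin> C \<Longrightarrow> \<rho> x = 0"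
  shows "0 < (\<integral>x. \<rho> x \<partial>mu)"
proof -
  define Op where "Op = \<rho> -` {1/2<..}"
  have oO: "open Op" unfolding Op_def by (rule open_vimage) (auto intro: c)
  have eO: "e \<in> Op" using r1 by (simp add: Op_def)
  have OC: "Op \<subseteq> C" using z by (force simp: Op_def)
  have Os: "Op \<in> sets mu" using oO by (simp add: mu_sets)
  have pos: "emeasure mu Op > 0" using mu_open[OF oO] eO by blast
  have fin: "emeasure mu Op < \<infinity>"
    using emeasure_mono[OF OC, of mu] mu_compact[OF C] by (simp add: mu_sets closed_borel[OF C])
  have mpos: "measure mu Op > 0" using pos fin by (simp add: measure_def enn2real_positive_iff)
  have "(\<integral>x. indicator Op x / 2 \<partial>mu) \<le> (\<integral>x. \<rho> x \<partial>mu)"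
  proof (rule integral_mono)
    show "integrable mu (\<lambda>x. indicator Op x / 2 :: real)"
      using integrable_real_indicator[OF Os fin] by simp
    show "integrable mu \<rho>" by (rule mu_int[OF C c z])
    show "indicator Op x / 2 \<le> \<rho> x" for x using nn[of x] by (auto simp: indicator_def Op_def)
  qed
  moreover have "(\<integral>x. indicator Op x / 2 \<partial>mu) = measure mu Op / 2" by (simp add: mu_space)
  ultimately show ?thesis using mpos by simp
qed

end



locale wrho = setting mul e iv mu dk K
  for mul :: "'g::t2_space \<Rightarrow> 'g \<Rightarrow> 'g" and e iv mu dk K +
  fixes \<rho> :: "'g \<Rightarrow> real" and Cr :: "'g set"
  assumes rc: "continuous_on UNIV \<rho>" and rnn: "\<And>x. 0 \<le> \<rho> x" and r1: "\<rho> e = 1"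
    and Crc: "compact Cr" and rz: "\<And>x. x \<notin> Cr \<Longrightarrow> \<rho> x = 0"
    and rconj: "\<And>k a. k \<in> K \<Longrightarrow> \<rho> (mul k (mul a (iv k))) = \<rho> a"
begin

definition gr :: "'g \<Rightarrow> 'g \<Rightarrow> real" where
  "gr x u = (\<integral>m. \<rho> (mul m (mul (iv x) (mul (iv m) u))) \<partial>dk)"
definition G :: "'g \<Rightarrow> 'g \<Rightarrow> complex" where
  "G x u = complex_of_real (gr x u)"
definition S :: "'g \<Rightarrow> 'g set" where
  "S x = (\<lambda>q. mul (fst q) (mul x (mul (iv (fst q)) (snd q)))) ` (K \<times> Cr)"
definition R :: real where "R = (\<integral>w. \<rho> w \<partial>mu)"

lemma R_gt0: "R > 0" unfolding R_def by (rule R_pos[OF rc rnn r1 Crc rz])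

lemma rho_int: "integrable mu \<rho>" by (rule mu_int[OF Crc rc rz])

lemma S_compact: "compact (S x)" unfolding S_def
  by (intro compact_continuous_image compact_Times K_compact Crc) (auto intro!: ci)

lemma rho_S: "m \<in> K \<Longrightarrow> u \<notin> S x \<Longrightarrow> \<rho> (mul m (mul (iv x) (mul (iv m) u))) = 0"
proof (rule rz)
  assume m: "m \<in> K" and u: "u \<notin> S x"
  show "mul m (mul (iv x) (mul (iv m) u)) \<notin> Cr"
  proof
    assume c: "mul m (mul (iv x) (mul (iv m) u)) \<in> Cr"
    have "u = mul m (mul x (mul (iv m) (mul m (mul (iv x) (mul (iv m) u)))))" by (simp add: assoc)
    then have "u \<in> S x" unfolding S_def using m c
      by (intro image_eqI[of _ _ "(m, mul m (mul (iv x) (mul (iv m) u)))"]) auto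
    with u show False by simp
  qed
qed

lemma Fr_cont: "continuous_on UNIV (\<lambda>q::'g\<times>'g. \<rho> (mul (snd q) (mul (iv x) (mul (iv (snd q)) (fst q)))))"
  by (rule continuous_on_compose2[OF rc]) (auto intro!: ci)

lemma Fr_cont1: "continuous_on UNIV (\<lambda>m. \<rho> (mul m (mul (iv x) (mul (iv m) u))))"
  by (rule continuous_on_compose2[OF rc]) (auto intro!: ci)

lemma gr_cont: "continuous_on UNIV (gr x)"
  unfolding gr_def[abs_def] using cfin_cont[OF dk_cfin Fr_cont[of x]] by simp

lemma G_cont: "continuous_on UNIV (G x)"
  unfolding G_def[abs_def] by (intro continuous_intros gr_cont)

lemma gr_zero: "u \<notin> S x \<Longrightarrow> gr x u = 0"
proof -
  assume u: "u \<notin> S x"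
  have "gr x u = (\<integral>m. 0 \<partial>dk)" unfolding gr_def
    by (rule dk_cong_c[OF Fr_cont1 continuous_on_const]) (use rho_S u in auto)
  then show ?thesis by simp
qed

lemma G_zero: "u \<notin> S x \<Longrightarrow> G x u = 0" by (simp add: G_def gr_zero)

lemma gr_nonneg: "0 \<le> gr x u" unfolding gr_def by (rule Bochner_Integration.integral_nonneg) (rule rnn)

lemma gr_central: assumes k: "k \<in> K" shows "gr x (mul k u) = gr x (mul u k)"
proof -
  define h where "h m = \<rho> (mul m (mul (iv x) (mul (iv m) (mul k u))))" for m
  have hm: "h \<in> borel_measurable borel" unfolding h_def by (rule borel_measurable_continuous_onI[OF Fr_cont1])
  have "gr x (mul k u) = (\<integral>m. h (mul k m) \<partial>dk)" unfolding gr_def h_def[symmetric]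
    by (rule dk_linv[OF hm k, symmetric])
  also have "\<dots> = (\<integral>m. \<rho> (mul k (mul m (mul (iv x) (mul (iv m) u)))) \<partial>dk)"
    unfolding h_def by (simp add: iv_mul assoc)
  also have "\<dots> = gr x (mul u k)" unfolding gr_def
  proof (rule Bochner_Integration.integral_cong[OF refl])
    fix m
    have "\<rho> (mul m (mul (iv x) (mul (iv m) (mul u k)))) =
       \<rho> (mul k (mul (mul m (mul (iv x) (mul (iv m) (mul u k)))) (iv k)))"
      by (rule rconj[OF k, symmetric])
    then show "\<rho> (mul k (mul m (mul (iv x) (mul (iv m) u)))) = \<rho> (mul m (mul (iv x) (mul (iv m) (mul u k))))"
      by (simp add: assoc)
  qed
  finally show ?thesis .
qed

lemma G_KK: "G x \<in> KK_space mul K"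
  unfolding KK_space_def K_central_def
proof (intro CollectI conjI ballI allI)
  show "continuous_on UNIV (G x)" by (rule G_cont)
  show "\<exists>C. compact C \<and> (\<forall>u. u \<notin> C \<longrightarrow> G x u = 0)"
    using S_compact G_zero by blast
  show "G x (mul k u) = G x (mul u k)" if "k \<in> K" for k u
    using gr_central[OF that] by (simp add: G_def)
qed

end



context wrho begin

lemma SL:
  fixes H :: "'g \<Rightarrow> complex" and eps :: real
  assumes Hc: "continuous_on UNIV H"
    and hyp: "\<And>m w. m \<in> K \<Longrightarrow> \<rho> w \<noteq> 0 \<Longrightarrow> norm (H (mul (mul m (mul x (iv m))) w) - H (mul m (mul x (iv m)))) \<le> eps"
  shows "norm ((\<integral>u. G x u * H u \<partial>mu) - complex_of_real R * (\<integral>m. H (mul m (mul x (iv m))) \<partial>dk)) \<le> R * eps"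
proof -
  define a where "a m = mul m (mul x (iv m))" for m
  define F where "F q = complex_of_real (\<rho> (mul (snd q) (mul (iv x) (mul (iv (snd q)) (fst q))))) * H (fst q)" for q
  have Fc: "continuous_on UNIV F" unfolding F_def
    by (intro continuous_intros continuous_on_compose2[OF Fr_cont[of x]] continuous_on_compose2[OF Hc]) auto
  have ac: "continuous_on UNIV a" unfolding a_def by (intro ci)
  have Hac: "continuous_on UNIV (\<lambda>m. H (a m))" by (rule continuous_on_compose2[OF Hc ac]) auto
  have Fm: "continuous_on UNIV (\<lambda>m. F (u,m))" for u
    by (rule continuous_on_compose2[OF Fc]) (auto intro!: continuous_intros)
  have Fu: "continuous_on UNIV (\<lambda>u. F (u,m))" for m
    by (rule continuous_on_compose2[OF Fc]) (auto intro!: continuous_intros)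
  define J where "J m = (\<integral>w. complex_of_real (\<rho> w) * H (mul (a m) w) \<partial>mu)" for m
  have Jc: "continuous_on UNIV J"
  proof -
    have "continuous_on UNIV (\<lambda>q. complex_of_real (\<rho> (snd q)) * H (mul (a (fst q)) (snd q)))"
      by (intro continuous_intros continuous_on_compose2[OF rc] continuous_on_compose2[OF Hc]
          continuous_on_compose2[OF ac] ci) auto
    from mu_cont[OF Crc this] show ?thesis unfolding J_def[abs_def] by (simp add: rz)
  qed
  have step1: "(\<integral>u. G x u * H u \<partial>mu) = (\<integral>u. \<integral>m. F (u,m) \<partial>dk \<partial>mu)"
  proof (rule Bochner_Integration.integral_cong[OF refl])
    fix u
    have "G x u * H u = (\<integral>m. complex_of_real (\<rho> (mul m (mul (iv x) (mul (iv m) u)))) \<partial>dk) * H u"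
      by (simp add: G_def gr_def)
    also have "\<dots> = (\<integral>m. complex_of_real (\<rho> (mul m (mul (iv x) (mul (iv m) u)))) * H u \<partial>dk)"
      using dk_int[of "\<lambda>m. complex_of_real (\<rho> (mul m (mul (iv x) (mul (iv m) u))))"]
      by (simp add: continuous_intros Fr_cont1)
    finally show "G x u * H u = (\<integral>m. F (u,m) \<partial>dk)" by (simp add: F_def)
  qed
  have step2: "(\<integral>u. \<integral>m. F (u,m) \<partial>dk \<partial>mu) = (\<integral>m. \<integral>u. F (u,m) \<partial>Mc (S x) \<partial>dk)"
    by (rule mix_fub[OF S_compact Fc]) (simp add: F_def rho_S)
  have step3: "(\<integral>m. \<integral>u. F (u,m) \<partial>Mc (S x) \<partial>dk) = (\<integral>m. J m \<partial>dk)"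
  proof (rule dk_cong_c[OF _ Jc])
    have Fs: "continuous_on UNIV (\<lambda>q. F (snd q, fst q))"
      by (rule continuous_on_compose2[OF Fc]) (auto intro!: continuous_intros)
    show "continuous_on UNIV (\<lambda>m. \<integral>u. F (u,m) \<partial>Mc (S x))"
      using cfin_cont[OF Mc_cfin[OF S_compact] Fs] by simp
    fix m assume m: "m \<in> K"
    have "(\<integral>u. F (u,m) \<partial>Mc (S x)) = (\<integral>u. F (u,m) \<partial>mu)"
      by (rule mix_fub2[OF S_compact Fc]) (simp add: F_def rho_S m)
    also have "\<dots> = (\<integral>w. F (mul (a m) w, m) \<partial>mu)"
      by (rule mu_linv[symmetric]) (rule borel_measurable_continuous_onI[OF Fu])
    also have "\<dots> = J m" unfolding J_def F_def a_def by (simp add: assoc)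
    finally show "(\<integral>u. F (u,m) \<partial>Mc (S x)) = J m" .
  qed
  have step4: "complex_of_real R * (\<integral>m. H (a m) \<partial>dk) = (\<integral>m. (\<integral>w. complex_of_real (\<rho> w) * H (a m) \<partial>mu) \<partial>dk)"
  proof -
    have "complex_of_real R * (\<integral>m. H (a m) \<partial>dk) = (\<integral>m. complex_of_real R * H (a m) \<partial>dk)"
      using dk_int[OF Hac] by simp
    also have "\<dots> = (\<integral>m. (\<integral>w. complex_of_real (\<rho> w) * H (a m) \<partial>mu) \<partial>dk)"
    proof (rule Bochner_Integration.integral_cong[OF refl])
      fix m
      have "(\<integral>w. complex_of_real (\<rho> w) * H (a m) \<partial>mu) = (\<integral>w. complex_of_real (\<rho> w) \<partial>mu) * H (a m)"
        using rho_int by simp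
      then show "complex_of_real R * H (a m) = (\<integral>w. complex_of_real (\<rho> w) * H (a m) \<partial>mu)"
        by (simp add: R_def)
    qed
    finally show ?thesis .
  qed
  define D where "D m = (\<integral>w. complex_of_real (\<rho> w) * (H (mul (a m) w) - H (a m)) \<partial>mu)" for m
  have int1: "integrable mu (\<lambda>w. complex_of_real (\<rho> w) * H (mul (a m) w))" for m
    by (rule mu_int[OF Crc]) (auto intro!: continuous_intros continuous_on_compose2[OF rc]
         continuous_on_compose2[OF Hc] ci simp: rz)
  have int2: "integrable mu (\<lambda>w. complex_of_real (\<rho> w) * H (a m))" for m
    by (rule mu_int[OF Crc]) (auto intro!: continuous_intros continuous_on_compose2[OF rc] simp: rz)
  have JD: "J m - (\<integral>w. complex_of_real (\<rho> w) * H (a m) \<partial>mu) = D m" for m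
    unfolding J_def D_def using int1[of m] int2[of m] by (simp add: algebra_simps)
  have Dc: "continuous_on UNIV (\<lambda>m. (\<integral>w. complex_of_real (\<rho> w) * H (a m) \<partial>mu))"
  proof -
    have "(\<lambda>m. (\<integral>w. complex_of_real (\<rho> w) * H (a m) \<partial>mu)) = (\<lambda>m. complex_of_real R * H (a m))"
      using rho_int by (auto simp: R_def)
    then show ?thesis by (simp add: continuous_intros Hac)
  qed
  have Dbound: "norm (D m) \<le> R * eps" if m: "m \<in> K" for m
  proof -
    have "norm (D m) \<le> (\<integral>w. norm (complex_of_real (\<rho> w) * (H (mul (a m) w) - H (a m))) \<partial>mu)"
      unfolding D_def by (rule integral_norm_bound)
    also have "\<dots> \<le> (\<integral>w. \<rho> w * eps \<partial>mu)"
    proof (rule integral_mono)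
      show "integrable mu (\<lambda>w. norm (complex_of_real (\<rho> w) * (H (mul (a m) w) - H (a m))))"
        by (rule mu_int[OF Crc]) (auto intro!: continuous_intros continuous_on_compose2[OF rc]
         continuous_on_compose2[OF Hc] ci simp: rz)
      show "integrable mu (\<lambda>w. \<rho> w * eps)" using rho_int by simp
      fix w
      show "norm (complex_of_real (\<rho> w) * (H (mul (a m) w) - H (a m))) \<le> \<rho> w * eps"
      proof (cases "\<rho> w = 0")
        case True then show ?thesis by simp
      next
        case False
        have "norm (complex_of_real (\<rho> w) * (H (mul (a m) w) - H (a m))) = \<rho> w * norm (H (mul (a m) w) - H (a m))"
          using rnn[of w] by (simp add: norm_mult)
        also have "\<dots> \<le> \<rho> w * eps" using hyp[OF m False] rnn[of w]
          by (intro mult_left_mono) (auto simp: a_def)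
        finally show ?thesis .
      qed
    qed
    also have "\<dots> = R * eps" using rho_int by (simp add: R_def)
    finally show ?thesis .
  qed
  have "(\<integral>u. G x u * H u \<partial>mu) - complex_of_real R * (\<integral>m. H (a m) \<partial>dk)
      = (\<integral>m. J m \<partial>dk) - (\<integral>m. (\<integral>w. complex_of_real (\<rho> w) * H (a m) \<partial>mu) \<partial>dk)"
    using step1 step2 step3 step4 by simp
  also have "\<dots> = (\<integral>m. D m \<partial>dk)"
    using dk_int[OF Jc] dk_int[OF Dc] by (simp add: JD[symmetric])
  finally have eq: "(\<integral>u. G x u * H u \<partial>mu) - complex_of_real R * (\<integral>m. H (a m) \<partial>dk) = (\<integral>m. D m \<partial>dk)" .
  have Dcont: "continuous_on UNIV D"
  proof -
    have "D = (\<lambda>m. J m - (\<integral>w. complex_of_real (\<rho> w) * H (a m) \<partial>mu))" using JD by auto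
    then show ?thesis using Jc Dc by (simp add: continuous_on_diff)
  qed
  show ?thesis unfolding a_def[symmetric] eq
    by (rule dk_bound[OF dk_int[OF Dcont] Dbound])
qed

end



context setting begin

lemma omega_conj:
  assumes "K_central mul K \<omega>" "k \<in> K" shows "\<omega> (mul k (mul a (iv k))) = \<omega> a"
proof -
  have "\<omega> (mul k (mul a (iv k))) = \<omega> (mul (mul a (iv k)) k)"
    using assms unfolding K_central_def by blast
  then show ?thesis by (simp add: assoc)
qed

lemma UCL:
  fixes \<Gamma> :: "'p::t2_space \<times> 'g \<Rightarrow> complex"
  assumes P: "compact P" and G: "continuous_on UNIV \<Gamma>" and eps: "eps > 0"
  shows "\<exists>V. open V \<and> e \<in> V \<and> (\<forall>p\<in>P. \<forall>w\<in>V. norm (\<Gamma> (p,w) - \<Gamma> (p,e)) \<le> eps)"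
proof -
  define W where "W = (\<lambda>q::'g\<times>'p. norm (\<Gamma> (snd q, fst q) - \<Gamma> (snd q, e))) -` {..<eps}"
  have "continuous_on UNIV (\<lambda>q::'g\<times>'p. norm (\<Gamma> (snd q, fst q) - \<Gamma> (snd q, e)))"
    by (intro continuous_intros continuous_on_compose2[OF G]) auto
  then have "open W" unfolding W_def by (intro open_vimage) auto
  moreover have "{e} \<times> P \<subseteq> W" using eps by (auto simp: W_def)
  ultimately obtain X0 where "e \<in> X0" "open X0" "X0 \<times> P \<subseteq> W"
    using Elementary_Topology.tube_lemma[OF P] by metis
  then show ?thesis by (intro exI[of _ X0]) (force simp: W_def)
qed

end

context wrho begin

definition I :: "('g \<Rightarrow> complex) \<Rightarrow> 'g \<Rightarrow> 'g \<Rightarrow> complex" where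
  "I \<omega> y u = (\<integral>v. G y v * \<omega> (mul u v) \<partial>mu)"
definition Psi :: "('g \<Rightarrow> complex) \<Rightarrow> 'g \<Rightarrow> 'g \<Rightarrow> complex" where
  "Psi \<omega> y u = (\<integral>n. \<omega> (mul u (mul n (mul y (iv n)))) \<partial>dk)"
definition Phi :: "('g \<Rightarrow> complex) \<Rightarrow> 'g \<Rightarrow> 'g \<Rightarrow> complex" where
  "Phi \<omega> x y = (\<integral>k. \<omega> (mul (mul x k) (mul y (iv k))) \<partial>dk)"

lemma I_cont: assumes w: "continuous_on UNIV \<omega>" shows "continuous_on UNIV (I \<omega> y)"
proof -
  have "continuous_on UNIV (\<lambda>q. G y (snd q) * \<omega> (mul (fst q) (snd q)))"
    by (intro continuous_intros continuous_on_compose2[OF G_cont] continuous_on_compose2[OF w] ci) auto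
  from mu_cont[OF S_compact[of y] this] show ?thesis unfolding I_def[abs_def] by (simp add: G_zero)
qed

lemma Psi_cont: assumes w: "continuous_on UNIV \<omega>" shows "continuous_on UNIV (Psi \<omega> y)"
proof -
  have "continuous_on UNIV (\<lambda>q. \<omega> (mul (fst q) (mul (snd q) (mul y (iv (snd q))))))"
    by (intro continuous_on_compose2[OF w] ci) auto
  from cfin_cont[OF dk_cfin this] show ?thesis unfolding Psi_def[abs_def] by simp
qed

lemma int_G: "(\<integral>u. G x u \<partial>mu) = complex_of_real R"
proof -
  have "norm ((\<integral>u. G x u * 1 \<partial>mu) - complex_of_real R * (\<integral>m. 1 \<partial>dk)) \<le> R * 0"
    by (rule SL) auto
  then show ?thesis by simp
qed

lemma int_gr: "(\<integral>u. gr x u \<partial>mu) = R"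
  using int_G[of x] by (simp add: G_def)

lemma T_eq:
  assumes w: "continuous_on UNIV \<omega>"
  shows "(\<integral>z. \<omega> z * convolution mul iv mu (G x) (G y) z \<partial>mu) = (\<integral>u. G x u * I \<omega> y u \<partial>mu)"
proof -
  define P where "P = (\<lambda>q. mul (fst q) (snd q)) ` (S x \<times> S y)"
  have Pc: "compact P" unfolding P_def
    by (intro compact_continuous_image compact_Times S_compact) (auto intro!: ci)
  define F where "F q = \<omega> (fst q) * (G x (snd q) * G y (mul (iv (snd q)) (fst q)))" for q
  have Fc: "continuous_on UNIV F" unfolding F_def
    by (intro continuous_intros continuous_on_compose2[OF G_cont] continuous_on_compose2[OF w] ci) auto
  have Fz: "F (z,u) = 0" if "z \<notin> P \<or> u \<notin> S x" for z u
  proof (cases "u \<in> S x \<and> mul (iv u) z \<in> S y")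
    case True
    then have "z \<in> P" unfolding P_def by (intro image_eqI[of _ _ "(u, mul (iv u) z)"]) auto
    with that True show ?thesis by auto
  next
    case False then show ?thesis by (auto simp: F_def G_zero)
  qed
  have "(\<integral>z. \<omega> z * convolution mul iv mu (G x) (G y) z \<partial>mu) = (\<integral>z. \<integral>u. F (z,u) \<partial>mu \<partial>mu)"
    by (simp add: convolution_def F_def)
  also have "\<dots> = (\<integral>u. \<integral>z. F (z,u) \<partial>mu \<partial>mu)"
    by (rule mu_fub[OF Pc S_compact Fc]) (use Fz in auto)
  also have "\<dots> = (\<integral>u. G x u * I \<omega> y u \<partial>mu)"
  proof (rule Bochner_Integration.integral_cong[OF refl])
    fix u
    have m: "(\<lambda>z. \<omega> z * G y (mul (iv u) z)) \<in> borel_measurable borel"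
      by (intro borel_measurable_continuous_onI continuous_intros continuous_on_compose2[OF G_cont] w ci) auto
    have "(\<lambda>z. F (z,u)) = (\<lambda>z. G x u * (\<omega> z * G y (mul (iv u) z)))" by (auto simp: F_def)
    then have "(\<integral>z. F (z,u) \<partial>mu) = G x u * (\<integral>z. \<omega> z * G y (mul (iv u) z) \<partial>mu)"
      by simp
    also have "(\<integral>z. \<omega> z * G y (mul (iv u) z) \<partial>mu) = (\<integral>v. \<omega> (mul u v) * G y (mul (iv u) (mul u v)) \<partial>mu)"
      by (rule mu_linv[OF m, symmetric])
    also have "\<dots> = I \<omega> y u" by (simp add: I_def mult.commute)
    finally show "(\<integral>z. F (z,u) \<partial>mu) = G x u * I \<omega> y u" .
  qed
  finally show ?thesis .
qed

end



context wrho begin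

lemma Psi_orbit:
  assumes kc: "K_central mul K \<omega>" and w: "continuous_on UNIV \<omega>" and m: "m \<in> K"
  shows "Psi \<omega> y (mul m (mul x (iv m))) = Phi \<omega> x y"
proof -
  define h where "h n = \<omega> (mul x (mul (mul (iv m) n) (mul y (mul (iv n) m))))" for n
  have hc: "continuous_on UNIV h" unfolding h_def by (intro continuous_on_compose2[OF w] ci) auto
  have "Psi \<omega> y (mul m (mul x (iv m))) = (\<integral>n. h n \<partial>dk)" unfolding Psi_def
  proof (rule Bochner_Integration.integral_cong[OF refl])
    fix n
    have "\<omega> (mul (mul m (mul x (iv m))) (mul n (mul y (iv n)))) =
      \<omega> (mul (iv m) (mul (mul (mul m (mul x (iv m))) (mul n (mul y (iv n)))) (iv (iv m))))"
      by (rule omega_conj[OF kc, symmetric]) (simp add: m)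
    then show "\<omega> (mul (mul m (mul x (iv m))) (mul n (mul y (iv n)))) = h n"
      by (simp add: h_def assoc)
  qed
  also have "\<dots> = (\<integral>k. h (mul m k) \<partial>dk)"
    by (rule dk_linv[symmetric]) (use borel_measurable_continuous_onI[OF hc] m in auto)
  also have "\<dots> = Phi \<omega> x y" unfolding Phi_def h_def by (simp add: assoc iv_mul)
  finally show ?thesis .
qed

lemma main_est:
  assumes w: "continuous_on UNIV \<omega>" and kc: "K_central mul K \<omega>" and eps: "eps \<ge> 0"
    and UC1: "\<And>u n w. u \<in> S x \<Longrightarrow> n \<in> K \<Longrightarrow> \<rho> w \<noteq> 0 \<Longrightarrow>
       norm (\<omega> (mul u (mul (mul n (mul y (iv n))) w)) - \<omega> (mul u (mul n (mul y (iv n))))) \<le> eps"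
    and UC2: "\<And>m n w. m \<in> K \<Longrightarrow> n \<in> K \<Longrightarrow> \<rho> w \<noteq> 0 \<Longrightarrow>
       norm (\<omega> (mul (mul (mul m (mul x (iv m))) w) (mul n (mul y (iv n))))
             - \<omega> (mul (mul m (mul x (iv m))) (mul n (mul y (iv n))))) \<le> eps"
  shows "norm ((\<integral>u. G x u * I \<omega> y u \<partial>mu) - complex_of_real (R*R) * Phi \<omega> x y) \<le> 2*R*R*eps"
proof -
  have Rp: "R > 0" by (rule R_gt0)
  have Ic: "continuous_on UNIV (I \<omega> y)" by (rule I_cont[OF w])
  have Pc: "continuous_on UNIV (Psi \<omega> y)" by (rule Psi_cont[OF w])
  have A: "norm (I \<omega> y u - complex_of_real R * Psi \<omega> y u) \<le> R * eps" if u: "u \<in> S x" for u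
  proof -
    have wu: "continuous_on UNIV (\<lambda>v. \<omega> (mul u v))" by (intro continuous_on_compose2[OF w] ci) auto
    have "norm ((\<integral>v. G y v * \<omega> (mul u v) \<partial>mu) - complex_of_real R * (\<integral>m. \<omega> (mul u (mul m (mul y (iv m)))) \<partial>dk)) \<le> R * eps"
      by (rule SL[OF wu]) (use UC1[OF u] in auto)
    then show ?thesis by (simp add: I_def Psi_def)
  qed
  have B: "norm ((\<integral>u. G x u * Psi \<omega> y u \<partial>mu) - complex_of_real R * (\<integral>m. Psi \<omega> y (mul m (mul x (iv m))) \<partial>dk)) \<le> R * eps"
  proof (rule SL[OF Pc])
    fix m w assume m: "m \<in> K" and rw: "\<rho> w \<noteq> 0"
    define a where "a = mul m (mul x (iv m))"
    have c1: "continuous_on UNIV (\<lambda>n. \<omega> (mul (mul a w) (mul n (mul y (iv n)))))"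
      by (intro continuous_on_compose2[OF w] ci) auto
    have c2: "continuous_on UNIV (\<lambda>n. \<omega> (mul a (mul n (mul y (iv n)))))"
      by (intro continuous_on_compose2[OF w] ci) auto
    have "Psi \<omega> y (mul a w) - Psi \<omega> y a =
       (\<integral>n. \<omega> (mul (mul a w) (mul n (mul y (iv n)))) - \<omega> (mul a (mul n (mul y (iv n)))) \<partial>dk)"
      unfolding Psi_def using dk_int[OF c1] dk_int[OF c2] by simp
    also have "norm \<dots> \<le> eps"
      by (rule dk_bound) (use dk_int[OF c1] dk_int[OF c2] UC2[OF m _ rw] in \<open>auto simp: a_def\<close>)
    finally show "norm (Psi \<omega> y (mul a w) - Psi \<omega> y a) \<le> eps" .
  qed
  have C: "(\<integral>m. Psi \<omega> y (mul m (mul x (iv m))) \<partial>dk) = Phi \<omega> x y"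
  proof -
    have "(\<integral>m. Psi \<omega> y (mul m (mul x (iv m))) \<partial>dk) = (\<integral>m. Phi \<omega> x y \<partial>dk)"
      by (rule dk_cong_c) (auto intro!: continuous_on_compose2[OF Pc] ci simp: Psi_orbit[OF kc w])
    then show ?thesis by simp
  qed
  have i1: "integrable mu (\<lambda>u. G x u * I \<omega> y u)"
    by (rule mu_int[OF S_compact[of x]]) (auto intro!: continuous_intros G_cont Ic simp: G_zero)
  have i2: "integrable mu (\<lambda>u. G x u * Psi \<omega> y u)"
    by (rule mu_int[OF S_compact[of x]]) (auto intro!: continuous_intros G_cont Pc simp: G_zero)
  have D1: "norm (\<integral>u. G x u * (I \<omega> y u - complex_of_real R * Psi \<omega> y u) \<partial>mu) \<le> R * eps * R"
  proof -
    have "norm (\<integral>u. G x u * (I \<omega> y u - complex_of_real R * Psi \<omega> y u) \<partial>mu)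
        \<le> (\<integral>u. norm (G x u * (I \<omega> y u - complex_of_real R * Psi \<omega> y u)) \<partial>mu)"
      by (rule integral_norm_bound)
    also have "\<dots> \<le> (\<integral>u. gr x u * (R * eps) \<partial>mu)"
    proof (rule integral_mono)
      show "integrable mu (\<lambda>u. norm (G x u * (I \<omega> y u - complex_of_real R * Psi \<omega> y u)))"
        by (rule mu_int[OF S_compact[of x]]) (auto intro!: continuous_intros G_cont Ic Pc simp: G_zero)
      show "integrable mu (\<lambda>u. gr x u * (R * eps))"
        by (rule mu_int[OF S_compact[of x]]) (auto intro!: continuous_intros gr_cont simp: gr_zero)
      fix u
      show "norm (G x u * (I \<omega> y u - complex_of_real R * Psi \<omega> y u)) \<le> gr x u * (R * eps)"
      proof (cases "u \<in> S x")
        case True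
        then show ?thesis using A[OF True] gr_nonneg[of x u]
          by (simp add: G_def norm_mult mult_left_mono)
      next
        case False then show ?thesis by (simp add: G_zero gr_zero)
      qed
    qed
    also have "\<dots> = R * eps * R" using int_gr[of x] by (simp add: mult.commute)
    finally show ?thesis .
  qed
  have eq: "(\<integral>u. G x u * I \<omega> y u \<partial>mu) - complex_of_real (R*R) * Phi \<omega> x y =
     (\<integral>u. G x u * (I \<omega> y u - complex_of_real R * Psi \<omega> y u) \<partial>mu)
     + complex_of_real R * ((\<integral>u. G x u * Psi \<omega> y u \<partial>mu) - complex_of_real R * (\<integral>m. Psi \<omega> y (mul m (mul x (iv m))) \<partial>dk))"
    using i1 i2 by (simp add: C algebra_simps)
  have "norm ((\<integral>u. G x u * I \<omega> y u \<partial>mu) - complex_of_real (R*R) * Phi \<omega> x y) \<le> R * eps * R + R * (R * eps)"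
    unfolding eq using D1 B Rp
    by (intro order.trans[OF norm_triangle_ineq] add_mono) (auto simp: norm_mult intro: mult_left_mono)
  then show ?thesis by (simp add: algebra_simps)
qed

end



context setting begin

lemma sym_Phi:
  fixes \<omega> :: "'g \<Rightarrow> complex"
  assumes cp: "central_pair mul iv mu K" and w: "continuous_on UNIV \<omega>" and kc: "K_central mul K \<omega>"
  shows "(\<integral>k. \<omega> (mul (mul x k) (mul y (iv k))) \<partial>dk) = (\<integral>k. \<omega> (mul (mul y k) (mul x (iv k))) \<partial>dk)"
    (is "?A = ?B")
proof -
  have bound: "norm (?A - ?B) \<le> 4 * eps" if eps: "eps > 0" for eps
  proof -
    obtain U0 C0 where UC: "open U0" "compact C0" "e \<in> U0" "U0 \<subseteq> C0" using loc_compact by blast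
    define Sx where "Sx z = (\<lambda>q. mul (fst q) (mul z (mul (iv (fst q)) (snd q)))) ` (K \<times> C0)" for z
    have Sxc: "compact (Sx z)" for z unfolding Sx_def
      by (intro compact_continuous_image compact_Times K_compact UC(2)) (auto intro!: ci)
    have KK: "compact (K \<times> K)" by (intro compact_Times K_compact)
    have U1: "\<exists>V. open V \<and> e \<in> V \<and> (\<forall>u\<in>Sx a. \<forall>n\<in>K. \<forall>w\<in>V.
        norm (\<omega> (mul u (mul (mul n (mul b (iv n))) w)) - \<omega> (mul u (mul n (mul b (iv n))))) \<le> eps)" for a b
    proof -
      have c: "continuous_on UNIV (\<lambda>q::('g\<times>'g)\<times>'g. \<omega> (mul (fst (fst q)) (mul (mul (snd (fst q)) (mul b (iv (snd (fst q))))) (snd q))))"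
        by (intro continuous_on_compose2[OF w] ci) auto
      show ?thesis using UCL[OF compact_Times[OF Sxc[of a] K_compact] c eps] by simp
    qed
    have U2: "\<exists>V. open V \<and> e \<in> V \<and> (\<forall>m\<in>K. \<forall>n\<in>K. \<forall>w\<in>V.
        norm (\<omega> (mul (mul (mul m (mul a (iv m))) w) (mul n (mul b (iv n))))
             - \<omega> (mul (mul m (mul a (iv m))) (mul n (mul b (iv n))))) \<le> eps)" for a b
    proof -
      have c: "continuous_on UNIV (\<lambda>q::('g\<times>'g)\<times>'g. \<omega> (mul (mul (mul (fst (fst q)) (mul a (iv (fst (fst q))))) (snd q)) (mul (snd (fst q)) (mul b (iv (snd (fst q)))))))"
        by (intro continuous_on_compose2[OF w] ci) auto
      show ?thesis using UCL[OF KK c eps] by simp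
    qed
    obtain V1 where V1: "open V1" "e \<in> V1" "\<And>u n w. u \<in> Sx x \<Longrightarrow> n \<in> K \<Longrightarrow> w \<in> V1 \<Longrightarrow>
        norm (\<omega> (mul u (mul (mul n (mul y (iv n))) w)) - \<omega> (mul u (mul n (mul y (iv n))))) \<le> eps"
      using U1[of x y] by blast
    obtain V2 where V2: "open V2" "e \<in> V2" "\<And>u n w. u \<in> Sx y \<Longrightarrow> n \<in> K \<Longrightarrow> w \<in> V2 \<Longrightarrow>
        norm (\<omega> (mul u (mul (mul n (mul x (iv n))) w)) - \<omega> (mul u (mul n (mul x (iv n))))) \<le> eps"
      using U1[of y x] by blast
    obtain V3 where V3: "open V3" "e \<in> V3" "\<And>m n w. m \<in> K \<Longrightarrow> n \<in> K \<Longrightarrow> w \<in> V3 \<Longrightarrow>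
        norm (\<omega> (mul (mul (mul m (mul x (iv m))) w) (mul n (mul y (iv n))))
             - \<omega> (mul (mul m (mul x (iv m))) (mul n (mul y (iv n))))) \<le> eps"
      using U2[of x y] by blast
    obtain V4 where V4: "open V4" "e \<in> V4" "\<And>m n w. m \<in> K \<Longrightarrow> n \<in> K \<Longrightarrow> w \<in> V4 \<Longrightarrow>
        norm (\<omega> (mul (mul (mul m (mul y (iv m))) w) (mul n (mul x (iv n))))
             - \<omega> (mul (mul m (mul y (iv m))) (mul n (mul x (iv n))))) \<le> eps"
      using U2[of y x] by blast
    define V where "V = U0 \<inter> V1 \<inter> V2 \<inter> V3 \<inter> V4"
    have V: "open V" "e \<in> V" using UC V1 V2 V3 V4 by (auto simp: V_def)
    obtain \<rho> :: "'g \<Rightarrow> real" and C where r: "continuous_on UNIV \<rho>" "\<And>x. 0 \<le> \<rho> x" "\<rho> e = 1"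
      "\<And>x. x \<notin> V \<Longrightarrow> \<rho> x = 0" "compact C" "\<And>x. x \<notin> C \<Longrightarrow> \<rho> x = 0"
      "\<And>k a. k \<in> K \<Longrightarrow> \<rho> (mul k (mul a (iv k))) = \<rho> a"
      using exists_rho[OF V] by blast
    have rV: "w \<in> V" if "\<rho> w \<noteq> 0" for w using r(4) that by blast
    interpret W: wrho mul e iv mu dk K \<rho> C0
    proof
      show "\<rho> x = 0" if "x \<notin> C0" for x using r(4) that UC(4) by (auto simp: V_def)
    qed (use r UC in auto)
    have SS: "W.S z = Sx z" for z by (simp add: W.S_def Sx_def)
    have e1: "norm ((\<integral>u. W.G x u * W.I \<omega> y u \<partial>mu) - complex_of_real (W.R*W.R) * W.Phi \<omega> x y) \<le> 2*W.R*W.R*eps"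
      by (rule W.main_est[OF w kc]) (use eps V1 V3 rV in \<open>auto simp: SS V_def\<close>)
    have e2: "norm ((\<integral>u. W.G y u * W.I \<omega> x u \<partial>mu) - complex_of_real (W.R*W.R) * W.Phi \<omega> y x) \<le> 2*W.R*W.R*eps"
      by (rule W.main_est[OF w kc]) (use eps V2 V4 rV in \<open>auto simp: SS V_def\<close>)
    have conv: "convolution mul iv mu (W.G x) (W.G y) = convolution mul iv mu (W.G y) (W.G x)"
      using cp W.G_KK unfolding central_pair_def by blast
    have T: "(\<integral>u. W.G x u * W.I \<omega> y u \<partial>mu) = (\<integral>u. W.G y u * W.I \<omega> x u \<partial>mu)"
      using W.T_eq[OF w, of x y] W.T_eq[OF w, of y x] conv by simp
    define X where "X = (\<integral>u. W.G x u * W.I \<omega> y u \<partial>mu)"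
    define r2 where "r2 = W.R * W.R"
    have r2p: "r2 > 0" using W.R_gt0 by (simp add: r2_def)
    have "norm (complex_of_real r2 * (W.Phi \<omega> x y - W.Phi \<omega> y x))
        = norm ((X - complex_of_real r2 * W.Phi \<omega> y x) - (X - complex_of_real r2 * W.Phi \<omega> x y))"
      by (simp add: algebra_simps)
    also have "\<dots> \<le> norm (X - complex_of_real r2 * W.Phi \<omega> y x) + norm (X - complex_of_real r2 * W.Phi \<omega> x y)"
      by (rule norm_triangle_ineq4)
    also have "\<dots> \<le> 2*r2*eps + 2*r2*eps"
    proof (rule add_mono)
      show "norm (X - complex_of_real r2 * W.Phi \<omega> y x) \<le> 2*r2*eps"
        using e2 unfolding X_def r2_def T by (simp add: mult.assoc)
      show "norm (X - complex_of_real r2 * W.Phi \<omega> x y) \<le> 2*r2*eps"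
        using e1 unfolding X_def r2_def by (simp add: mult.assoc)
    qed
    finally have h: "norm (complex_of_real r2 * (W.Phi \<omega> x y - W.Phi \<omega> y x)) \<le> 2*r2*eps + 2*r2*eps" .
    have nm: "norm (complex_of_real r2 * (W.Phi \<omega> x y - W.Phi \<omega> y x)) = r2 * norm (W.Phi \<omega> x y - W.Phi \<omega> y x)"
      using r2p by (simp add: norm_mult)
    have "r2 * norm (W.Phi \<omega> x y - W.Phi \<omega> y x) \<le> r2 * (4 * eps)" using h unfolding nm by (simp add: algebra_simps)
    then have "norm (W.Phi \<omega> x y - W.Phi \<omega> y x) \<le> 4 * eps" using r2p by (rule mult_left_le_imp_le)
    then show ?thesis by (simp add: W.Phi_def)
  qed
  show ?thesis
  proof (rule ccontr)
    assume "?A \<noteq> ?B"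
    then have p: "norm (?A - ?B) > 0" by simp
    have "norm (?A - ?B) \<le> 4 * (norm (?A - ?B) / 8)" by (rule bound) (use p in simp)
    with p show False by simp
  qed
qed

end


theorem corollary3p2:
  fixes mul :: "'g::t2_space \<Rightarrow> 'g \<Rightarrow> 'g" and e :: 'g and iv :: "'g \<Rightarrow> 'g"
    and mu dk :: "'g measure" and K :: "'g set"
    and \<omega> f :: "'g \<Rightarrow> complex"
  assumes "locally_compact_group mul e iv"
    and "left_haar_measure mul mu"
    and "compact_subgroup mul e iv K"
    and "normalized_haar_on mul K dk"
    and "central_pair mul iv mu K"
    and "continuous_on UNIV \<omega>" and "continuous_on UNIV f"
    and "K_central mul K \<omega>"
  shows "(\<forall>x y. (\<integral>k. \<omega> (mul (mul x k) (mul y (iv k))) \<partial>dk)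
                + (\<integral>k. \<omega> (mul (mul y k) (mul x (iv k))) \<partial>dk)
              = 2 * \<omega> x * f y + 2 * \<omega> y * f x)
     \<longleftrightarrow> (\<forall>x y. (\<integral>k. \<omega> (mul (mul x k) (mul y (iv k))) \<partial>dk)
              = \<omega> x * f y + \<omega> y * f x)"
proof -
  interpret setting mul e iv mu dk K
    using assms(1-4) by (unfold_locales) auto
  have sym: "(\<integral>k. \<omega> (mul (mul x k) (mul y (iv k))) \<partial>dk) = (\<integral>k. \<omega> (mul (mul y k) (mul x (iv k))) \<partial>dk)" for x y
    by (rule sym_Phi[OF assms(5) assms(6) assms(8)])
  show ?thesis
  proof
    assume h: "\<forall>x y. (\<integral>k. \<omega> (mul (mul x k) (mul y (iv k))) \<partial>dk)
                + (\<integral>k. \<omega> (mul (mul y k) (mul x (iv k))) \<partial>dk)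
              = 2 * \<omega> x * f y + 2 * \<omega> y * f x"
    show "\<forall>x y. (\<integral>k. \<omega> (mul (mul x k) (mul y (iv k))) \<partial>dk) = \<omega> x * f y + \<omega> y * f x"
    proof (intro allI)
      fix x y
      have "2 * (\<integral>k. \<omega> (mul (mul x k) (mul y (iv k))) \<partial>dk) = 2 * (\<omega> x * f y + \<omega> y * f x)"
        using h[rule_format, of x y] sym[of x y] by (simp add: algebra_simps)
      then show "(\<integral>k. \<omega> (mul (mul x k) (mul y (iv k))) \<partial>dk) = \<omega> x * f y + \<omega> y * f x"
        using mult_left_cancel[of "2::complex"] by (simp only: zero_neq_numeral[symmetric] not_False_eq_True)
    qed
  next
    assume h: "\<forall>x y. (\<integral>k. \<omega> (mul (mul x k) (mul y (iv k))) \<partial>dk) = \<omega> x * f y + \<omega> y * f x"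
    show "\<forall>x y. (\<integral>k. \<omega> (mul (mul x k) (mul y (iv k))) \<partial>dk)
                + (\<integral>k. \<omega> (mul (mul y k) (mul x (iv k))) \<partial>dk)
              = 2 * \<omega> x * f y + 2 * \<omega> y * f x"
      using h by (simp add: algebra_simps)
  qed
qed

end
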